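(* Define $F=(n_F)_{n\ge0}$ by $0_F=1$ and, for $n\ge1$, $n_F=a_n b_n$ where $a_n=2$ if $n$ is even and $a_n=1$ if $n$ is odd, and $b_n=3$ if $3\mid n$ and $b_n=1$ otherwise (so $F=1;\,1,2,3,2,1,6,1,2,3,\dots$ listing from $n=0$). Then $F$ is cobweb-admissible, but the layer $\langle\Phi_5\to\Phi_7\rangle$ of its cobweb poset (whose levels have $1,6,1$ vertices) admits no tiling by blocks of type $\sigma P_3$. Consequently, not every cobweb-admissible sequence is a cobweb tiling sequence.
   Context: Notation: $n_F\equiv F_n$. A sequence $F=(n_F)_{n\ge0}$ of natural numbers with $0_F=1$ is cobweb-admissible iff every $F$-nomial coefficient $\binom{n}{k}_F=\frac{n_F(n-1)_F\cdots(n-k+1)_F}{1_F2_F\cdots k_F}$, $0\le k\le n$, is a nonnegative integer. The cobweb poset of $F$ has, for each $s\ge1$, a level $\Phi_s$ consisting of $s_F$ distinct vertices (levels pairwise disjoint), plus a root level $\Phi_0$ with one vertex; for $x\in\Phi_i$, $y\in\Phi_j$ one has $x<y$ iff $i<j$. For $1\le a\le b$, the layer $\langle\Phi_a\to\Phi_b\rangle$ is the subposet on $\Phi_a\cup\dots\cup\Phi_b$; it has $m=b-a+1$ levels and its maximal chains form the set $\Phi_a\times\dots\times\Phi_b$. For a permutation $\sigma$ of $\{1,\dots,m\}$, a block of type $\sigma P_m$ in this layer is the subposet induced on $V_a\cup\dots\cup V_b$ where $V_{a-1+i}\subseteq\Phi_{a-1+i}$ and $|V_{a-1+i}|=\sigma(i)_F$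 for $i=1,\dots,m$; its maximal chains form the set $V_a\times\dots\times V_b$. A tiling of the layer is a finite family of such blocks ($\sigma$ may vary from block to block) whose sets $V_a\times\dots\times V_b$ partition $\Phi_a\times\dots\times\Phi_b$ (pairwise max-disjoint and covering all maximal chains). A cobweb tiling sequence is a cobweb-admissible sequence $F$ such that for all $1\le a\le b$ the layer $\langle\Phi_a\to\Phi_b\rangle$ admits a tiling by blocks of type $\sigma P_{b-a+1}$. *)

theory Defs
  imports Complex_Main "HOL-Combinatorics.Permutations"
begin

definition fnomial :: "(nat \<Rightarrow> nat) \<Rightarrow> nat \<Rightarrow> nat \<Rightarrow> rat" where
  "fnomial F n k = of_nat (\<Prod>i\<in>{n-k+1..n}. F i) / of_nat (\<Prod>i\<in>{1..k}. F i)"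

definition cobweb_admissible :: "(nat \<Rightarrow> nat) \<Rightarrow> bool" where
  "cobweb_admissible F \<longleftrightarrow> F 0 = 1 \<and>
     (\<forall>n k. k \<le> n \<longrightarrow> (\<Prod>i\<in>{1..k}. F i) \<noteq> 0 \<and> (\<exists>q::nat. fnomial F n k = of_nat q))"

text \<open>Level s of the cobweb poset is represented by the vertex set {0..<F s}
  (levels are disjoint since a vertex is tagged by its level).
  A maximal chain of the layer <Phi_a -> Phi_b> (m = b - a + 1 levels) is a list c of
  length m with c!i a vertex of level a+i.\<close>
definition layer_chains :: "(nat \<Rightarrow> nat) \<Rightarrow> nat \<Rightarrow> nat \<Rightarrow> nat list set" where
  "layer_chains F a b = {c. length c = b - a + 1 \<and> (\<forall>i < b - a + 1. c ! i < F (a + i))}"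

definition is_block :: "(nat \<Rightarrow> nat) \<Rightarrow> nat \<Rightarrow> nat \<Rightarrow> (nat \<Rightarrow> nat) \<Rightarrow> (nat \<Rightarrow> nat set) \<Rightarrow> bool" where
  "is_block F a b \<sigma> V \<longleftrightarrow> \<sigma> permutes {1..b - a + 1} \<and>
     (\<forall>i < b - a + 1. V i \<subseteq> {..<F (a + i)} \<and> card (V i) = F (\<sigma> (i + 1)))"

definition block_chains :: "nat \<Rightarrow> nat \<Rightarrow> (nat \<Rightarrow> nat set) \<Rightarrow> nat list set" where
  "block_chains a b V = {c. length c = b - a + 1 \<and> (\<forall>i < b - a + 1. c ! i \<in> V i)}"

definition layer_has_tiling :: "(nat \<Rightarrow> nat) \<Rightarrow> nat \<Rightarrow> nat \<Rightarrow> bool" where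
  "layer_has_tiling F a b \<longleftrightarrow>
     (\<exists>bs :: ((nat \<Rightarrow> nat) \<times> (nat \<Rightarrow> nat set)) list.
        (\<forall>j < length bs. is_block F a b (fst (bs ! j)) (snd (bs ! j))) \<and>
        (\<forall>j < length bs. \<forall>l < length bs. j \<noteq> l \<longrightarrow>
            block_chains a b (snd (bs ! j)) \<inter> block_chains a b (snd (bs ! l)) = {}) \<and>
        (\<Union>j < length bs. block_chains a b (snd (bs ! j))) = layer_chains F a b)"

definition cobweb_tiling_sequence :: "(nat \<Rightarrow> nat) \<Rightarrow> bool" where
  "cobweb_tiling_sequence F \<longleftrightarrow> cobweb_admissible F \<and>
     (\<forall>a b. 1 \<le> a \<and> a \<le> b \<longrightarrow> layer_has_tiling F a b)"

definition Fex :: "nat \<Rightarrow> nat" where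
  "Fex n = (if n = 0 then 1 else (if even n then 2 else 1) * (if 3 dvd n then 3 else 1))"

end

theory Submission
  imports Defs
begin

lemma Fex_Suc: "Fex (Suc j) = (if 2 dvd Suc j then 2 else 1) * (if 3 dvd Suc j then 3 else 1)"
  by (simp add: Fex_def)

lemma div_step: "Suc j div (d::nat) = j div d + (if d dvd Suc j then 1 else 0)" if "d > 1"
  using that by (auto simp add: div_Suc dvd_eq_mod_eq_0)

lemma prod_Fex: "(\<Prod>i\<in>{m+1..m+k}. Fex i) =
   2^((m+k) div 2 - m div 2) * 3^((m+k) div 3 - m div 3)"
proof (induction k)
  case 0 then show ?case by simp
next
  case (Suc k)
  have e: "{m+1..m+Suc k} = insert (Suc (m+k)) {m+1..m+k}" by auto
  have "(\<Prod>i\<in>{m+1..m+Suc k}. Fex i) = Fex (Suc (m+k)) * (\<Prod>i\<in>{m+1..m+k}. Fex i)"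
    unfolding e by simp
  also have "\<dots> = Fex (Suc (m+k)) * (2^((m+k) div 2 - m div 2) * 3^((m+k) div 3 - m div 3))"
    using Suc by simp
  also have "\<dots> = 2^((m+Suc k) div 2 - m div 2) * 3^((m+Suc k) div 3 - m div 3)"
  proof -
    have m2: "m div 2 \<le> (m+k) div 2" by (simp add: div_le_mono)
    have m3: "m div 3 \<le> (m+k) div 3" by (simp add: div_le_mono)
    have s2: "(m+Suc k) div 2 = (m+k) div 2 + (if 2 dvd Suc (m+k) then 1 else 0)"
      using div_step[of 2 "m+k"] by simp
    have s3: "(m+Suc k) div 3 = (m+k) div 3 + (if 3 dvd Suc (m+k) then 1 else 0)"
      using div_step[of 3 "m+k"] by simp
    show ?thesis unfolding Fex_Suc s2 s3 using m2 m3
      by (simp add: Suc_diff_le power_Suc)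
  qed
  finally show ?case .
qed

lemma div_sum_le: "(m div (d::nat)) + k div d \<le> (m + k) div d"
  by (metis div_add1_eq le_add1)

lemma admissible: "cobweb_admissible Fex"
  unfolding cobweb_admissible_def
proof (intro conjI allI impI)
  show "Fex 0 = 1" by (simp add: Fex_def)
next
  fix n k :: nat assume kn: "k \<le> n"
  define m where "m = n - k"
  have n: "n = m + k" using kn m_def by simp
  have pk: "(\<Prod>i\<in>{1..k}. Fex i) = 2^(k div 2) * 3^(k div 3)"
    using prod_Fex[of 0 k] by simp
  then show "(\<Prod>i\<in>{1..k}. Fex i) \<noteq> 0" by simp
  have iv: "{n-k+1..n} = {m+1..m+k}" using n by simp
  have pn: "(\<Prod>i\<in>{n-k+1..n}. Fex i) = 2^((m+k) div 2 - m div 2) * 3^((m+k) div 3 - m div 3)"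
    unfolding iv by (rule prod_Fex)
  define e2 where "e2 = (m+k) div 2 - m div 2 - k div 2"
  define e3 where "e3 = (m+k) div 3 - m div 3 - k div 3"
  have a2: "(m+k) div 2 - m div 2 = e2 + k div 2" using div_sum_le[of m 2 k] e2_def by simp
  have a3: "(m+k) div 3 - m div 3 = e3 + k div 3" using div_sum_le[of m 3 k] e3_def by simp
  show "\<exists>q::nat. fnomial Fex n k = of_nat q"
  proof (intro exI)
    show "fnomial Fex n k = of_nat (2^e2 * 3^e3)"
      unfolding fnomial_def pn pk a2 a3 by (simp add: power_add)
  qed
qed

lemma no_block: "\<not> is_block Fex 5 7 \<sigma> V"
proof
  assume b: "is_block Fex 5 7 \<sigma> V"
  have p: "\<sigma> permutes {1..3}" using b by (simp add: is_block_def)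
  have one: "\<sigma> (i+1) = 1" if "i \<in> {0, 2}" for i
  proof -
    have i3: "i < 3" using that by auto
    have F: "Fex (5+i) = 1" using that by (auto simp: Fex_def)
    have "V i \<subseteq> {..<Fex (5+i)}" "card (V i) = Fex (\<sigma> (i+1))"
      using b i3 by (auto simp: is_block_def)
    then have "V i \<subseteq> {..<1}" "card (V i) = Fex (\<sigma> (i+1))" using F by auto
    then have c: "Fex (\<sigma> (i+1)) \<le> 1" by (metis card_lessThan card_mono finite_lessThan)
    have "\<sigma> (i+1) \<in> {1..3}" using p i3 permutes_in_image[OF p, of "i+1"] by simp
    then have "\<sigma> (i+1) = 1 \<or> \<sigma> (i+1) = 2 \<or> \<sigma> (i+1) = 3" by auto
    then show ?thesis using c by (auto simp: Fex_def)
  qed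
  have "\<sigma> 1 = \<sigma> 3" using one[of 0] one[of 2] by simp
  then show False proof -
    have "(1::nat) = 3" using permutes_inj[OF p] \<open>\<sigma> 1 = \<sigma> 3\<close> by (rule injD)
    then show False by simp
  qed
qed

lemma no_tiling: "\<not> layer_has_tiling Fex 5 7"
proof
  assume "layer_has_tiling Fex 5 7"
  then obtain bs :: "((nat \<Rightarrow> nat) \<times> (nat \<Rightarrow> nat set)) list" where
    b: "\<forall>j < length bs. is_block Fex 5 7 (fst (bs ! j)) (snd (bs ! j))" and
    u: "(\<Union>j < length bs. block_chains 5 7 (snd (bs ! j))) = layer_chains Fex 5 7"
    unfolding layer_has_tiling_def by blast
  have "bs = []" using b no_block by (cases bs) auto
  moreover have "[0,0,0] \<in> layer_chains Fex 5 7"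
    by (auto simp: layer_chains_def Fex_def less_Suc_eq nth_Cons')
  ultimately show False using u by auto
qed

theorem theorem3:
  shows "cobweb_admissible Fex \<and> \<not> layer_has_tiling Fex 5 7 \<and> \<not> cobweb_tiling_sequence Fex
         \<and> \<not> (\<forall>F. cobweb_admissible F \<longrightarrow> cobweb_tiling_sequence F)"
proof -
  have t: "\<not> cobweb_tiling_sequence Fex"
    unfolding cobweb_tiling_sequence_def using no_tiling by force
  show ?thesis using admissible no_tiling t by blast
qed

end
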